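(* Let $n\ge2$, $0<\varepsilon<1$ and $s\ge\lambda\ge1$. Let $G$ be an $n$-vertex $(\varepsilon,s)$-expander and let $U\subseteq V(G)$ with $|U|\le 2n/3$. Then there is a set $U'\subseteq U$ with $|N_G(U')|\ge\lambda|U'|$ and $|U'|\ge\frac{\varepsilon|U|}{3\lambda(\log n)^2}$.
   Context: Logarithms are base 2. For $U\subseteq V(G)$, $N_G(U)$ is the set of vertices outside $U$ with a neighbour in $U$; $G-F$ is $G$ with edge set $F$ deleted. An $n$-vertex graph $G$ is an $(\varepsilon,s)$-expander if for every $U\subseteq V(G)$, $F\subseteq E(G)$ with $1\le|U|\le\frac23n$ and $|F|\le s|U|$ we have $|N_{G-F}(U)|\ge\varepsilon|U|/(\log n)^2$. *)

theory Defs
  imports Complex_Main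
begin

definition simple_graph :: "'a set \<Rightarrow> 'a set set \<Rightarrow> bool" where
  "simple_graph V E \<longleftrightarrow> finite V \<and> (\<forall>e\<in>E. e \<subseteq> V \<and> card e = 2)"

definition nbhd :: "'a set \<Rightarrow> 'a set set \<Rightarrow> 'a set \<Rightarrow> 'a set" where
  "nbhd V E U = {v \<in> V - U. \<exists>u\<in>U. {u, v} \<in> E}"

definition expander :: "real \<Rightarrow> real \<Rightarrow> 'a set \<Rightarrow> 'a set set \<Rightarrow> bool" where
  "expander eps s V E \<longleftrightarrow>
     (\<forall>U F. U \<subseteq> V \<longrightarrow> F \<subseteq> E \<longrightarrow> 1 \<le> card U \<longrightarrow>
        real (card U) \<le> 2/3 * real (card V) \<longrightarrow> real (card F) \<le> s * real (card U) \<longrightarrow>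
        real (card (nbhd V (E - F) U)) \<ge> eps * real (card U) / (log 2 (real (card V)))\<^sup>2)"

end

theory Submission
  imports Defs
begin

theorem mainTheorem15:
  fixes V :: "'a set" and E :: "'a set set" and U :: "'a set"
    and n :: nat and eps s lambda :: real
  assumes "simple_graph V E"
    and "n = card V"
    and "n \<ge> 2"
    and "0 < eps" and "eps < 1"
    and "s \<ge> lambda" and "lambda \<ge> 1"
    and "expander eps s V E"
    and "U \<subseteq> V"
    and "real (card U) \<le> 2 * real n / 3"
  shows "\<exists>U'. U' \<subseteq> U \<and> real (card (nbhd V E U')) \<ge> lambda * real (card U') \<and>
           real (card U') \<ge> eps * real (card U) / (3 * lambda * (log 2 (real n))\<^sup>2)"
proof (cases "U = {}")
  case True
  then show ?thesis by (intro exI[of _ "{}"]) simp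
next
  case Une: False
  have finV: "finite V" using assms(1) unfolding simple_graph_def by blast
  have finU: "finite U" using assms(9) finV finite_subset by blast
  have cU: "card U \<ge> 1" using Une finU by (simp add: Suc_le_eq card_gt_0_iff)
  define L where "L = (log 2 (real n))\<^sup>2"
  have lg: "log 2 (real n) \<ge> 1" using assms(3) by simp
  have L1: "L \<ge> 1" unfolding L_def using lg
    by (metis one_le_power power2_eq_square)
  define t where "t = eps * real (card U) / (3 * lambda * L)"
  define m where "m = eps * real (card U) / L"
  have mt: "m = 3 * lambda * t" unfolding m_def t_def using assms(7) L1 by (simp add: field_simps)
  have mpos: "m > 0" unfolding m_def using assms(4) L1 cU by simp
  have tU: "t \<le> real (card U)"
  proof -
    have "eps * real (card U) \<le> 1 * real (card U)" using assms(5) by (intro mult_right_mono) auto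
    also have "\<dots> \<le> (3 * lambda * L) * real (card U)"
      using mult_mono[OF _ L1, of 1 "3*lambda"] assms(7) by (intro mult_right_mono) auto
    finally show ?thesis unfolding t_def using assms(7) L1
      by (simp add: divide_le_eq mult.commute)
  qed
  define Nout where "Nout Z = {v \<in> V - U. \<exists>z\<in>Z. {z, v} \<in> E}" for Z
  have finN: "finite (Nout Z)" for Z unfolding Nout_def using finV by auto
  have Nsub: "Nout Z \<subseteq> nbhd V E Z" if "Z \<subseteq> U" for Z
    using that unfolding Nout_def nbhd_def by auto
  define S where "S = {Z. Z \<subseteq> U \<and> lambda * real (card Z) \<le> real (card (Nout Z))}"
  have finS: "finite S" unfolding S_def using finU by (simp add: finite_Collect_subsets)
  have eS: "{} \<in> S" unfolding S_def by simp
  obtain Z where ZS: "Z \<in> S" and Zmax: "\<And>W. W \<in> S \<Longrightarrow> card W \<le> card Z"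
  proof -
    have "Max (card ` S) \<in> card ` S" using finS eS by (intro Max_in) auto
    then obtain Z where "Z \<in> S" "card Z = Max (card ` S)" by auto
    then show ?thesis using that finS by (metis Max_ge finite_imageI imageI)
  qed
  have ZU: "Z \<subseteq> U" and Zexp: "lambda * real (card Z) \<le> real (card (Nout Z))"
    using ZS unfolding S_def by auto
  have finZ: "finite Z" using ZU finU finite_subset by blast
  show ?thesis
  proof (cases "real (card Z) \<ge> t")
    case True
    have "card (Nout Z) \<le> card (nbhd V E Z)"
      by (rule card_mono) (use Nsub[OF ZU] finV in \<open>auto simp: nbhd_def\<close>)
    then show ?thesis using True Zexp ZU unfolding t_def L_def by (intro exI[of _ Z]) auto
  next
    case False
    hence ZneU: "Z \<noteq> U" using tU by auto
    then obtain u0 where u0: "u0 \<in> U - Z" using ZU by blast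
    have small: "real (card (Nout {u} - Nout Z)) < lambda" 
         and bigu: "real (card (Nout (insert u Z))) < lambda * (real (card Z) + 1)"
      if u: "u \<in> U - Z" for u
    proof -
      have c: "card (insert u Z) = card Z + 1" using u finZ by simp
      have "insert u Z \<notin> S" using Zmax[of "insert u Z"] c by auto
      hence lt: "real (card (Nout (insert u Z))) < lambda * (real (card Z) + 1)"
        using u ZU c unfolding S_def by (auto simp: add.commute)
      have eq: "Nout (insert u Z) = Nout Z \<union> (Nout {u} - Nout Z)"
        unfolding Nout_def by auto
      have "card (Nout (insert u Z)) = card (Nout Z) + card (Nout {u} - Nout Z)"
        unfolding eq by (rule card_Un_disjoint) (auto simp: finN)
      then show "real (card (Nout {u} - Nout Z)) < lambda" using lt Zexp
        by (simp add: algebra_simps)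
      show "real (card (Nout (insert u Z))) < lambda * (real (card Z) + 1)" by (rule lt)
    qed
    define F where "F = (\<Union>u\<in>U - Z. (\<lambda>v. {u, v}) ` (Nout {u} - Nout Z))"
    have FE: "F \<subseteq> E" unfolding F_def Nout_def by auto
    have "card F \<le> (\<Sum>u\<in>U - Z. card ((\<lambda>v. {u, v}) ` (Nout {u} - Nout Z)))"
      unfolding F_def using finU by (intro card_UN_le) auto
    also have "\<dots> \<le> (\<Sum>u\<in>U - Z. card (Nout {u} - Nout Z))"
      by (intro sum_mono card_image_le) (simp add: finN)
    finally have "real (card F) \<le> (\<Sum>u\<in>U - Z. real (card (Nout {u} - Nout Z)))"
      by (metis of_nat_le_iff of_nat_sum)
    also have "\<dots> \<le> (\<Sum>u\<in>U - Z. lambda)"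
      by (intro sum_mono) (use small in \<open>auto intro: less_imp_le\<close>)
    also have "\<dots> = lambda * real (card (U - Z))" by simp
    also have "\<dots> \<le> s * real (card U)"
      using assms(6,7) finU by (intro mult_mono) (auto intro: card_mono)
    finally have cF: "real (card F) \<le> s * real (card U)" .
    have "real (card (nbhd V (E - F) U)) \<ge> eps * real (card U) / (log 2 (real (card V)))\<^sup>2"
      using assms(8) unfolding expander_def
      using assms(9) FE cU assms(10) assms(2) cF by auto
    hence m1: "m \<le> real (card (nbhd V (E - F) U))"
      unfolding m_def L_def using assms(2) by simp
    have sub: "nbhd V (E - F) U \<subseteq> Nout Z"
    proof
      fix v assume "v \<in> nbhd V (E - F) U"
      then obtain u where v: "v \<in> V - U" "u \<in> U" "{u, v} \<in> E" "{u, v} \<notin> F"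
        unfolding nbhd_def by auto
      show "v \<in> Nout Z"
      proof (cases "u \<in> Z")
        case True then show ?thesis using v unfolding Nout_def by auto
      next
        case False
        have "v \<in> Nout {u}" using v unfolding Nout_def by auto
        then show ?thesis using v False unfolding F_def by auto
      qed
    qed
    have "card (nbhd V (E - F) U) \<le> card (Nout Z)" by (rule card_mono[OF finN sub])
    hence m2: "m \<le> real (card (Nout Z))" using m1 by linarith
    have "Nout Z \<subseteq> Nout (insert u0 Z)" unfolding Nout_def by auto
    hence "card (Nout Z) \<le> card (Nout (insert u0 Z))" by (rule card_mono[OF finN])
    hence m3: "m < lambda * (real (card Z) + 1)" using m2 bigu[OF u0] by linarith
    show ?thesis
    proof (cases "Z = {}")
      case True
      then have "Nout Z = {}" unfolding Nout_def by auto
      then show ?thesis using m2 mpos by simp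
    next
      case False
      then have "card Z \<ge> 1" using finZ by (simp add: Suc_le_eq card_gt_0_iff)
      hence "lambda * (real (card Z) + 1) \<le> 2 * lambda * real (card Z)"
        using assms(7) by (simp add: algebra_simps)
      also have "\<dots> < 2 * lambda * t" using \<open>\<not> t \<le> real (card Z)\<close> assms(7) by simp
      finally show ?thesis using m3 mt mpos assms(7) by linarith
    qed
  qed
qed

end
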